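(* Let $1\le p,q<\infty$ and $\theta>0$. The vanishing grand amalgam Lebesgue function space $$l^{\overset{\circ}{q}),\theta}(L^p)=\Big\{g\in l^{q),\theta}(L^p):\ \lim_{\varepsilon\to0}\varepsilon^{\theta}\sum_{n\in X}\Big(\int_n^{n+1}|g(x)|^p\,dx\Big)^{\frac{q(1+\varepsilon)}{p}}=0\Big\}$$ is a closed subspace of $l^{q),\theta}(L^p)$.
   Context: Let $X$ be one of $\mathbb N,\mathbb N_0,\mathbb Z$ and $I_k=[k,k+1)$ for $k\in X$. The space $l^{q),\theta}(L^p)$ consists of complex-valued measurable $g$ on $\bigcup_{k\in X}I_k$ with $g\chi_{I_k}\in L^p$ for all $k$ and $$\|g\|_{p,q),\theta}:=\sup_{\varepsilon>0}\Big(\varepsilon^{\theta}\sum_{k\in X}\Big(\int_k^{k+1}|g(x)|^p\,dx\Big)^{\frac{q(1+\varepsilon)}{p}}\Big)^{\frac{1}{q(1+\varepsilon)}}<\infty,$$ with the topology given by this norm. *)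

theory Defs
  imports "HOL-Analysis.Analysis"
begin

text \<open>Index set X is one of N = {1..}, N0 = {0..}, Z, viewed as subsets of int.
  I_k = [k, k+1).  The underlying domain is the union of the I_k.\<close>

definition blk :: "int \<Rightarrow> real set" where
  "blk k = {real_of_int k ..< real_of_int k + 1}"

definition dom_X :: "int set \<Rightarrow> real set" where
  "dom_X X = (\<Union>k\<in>X. blk k)"

definition blocknorm :: "real \<Rightarrow> (real \<Rightarrow> complex) \<Rightarrow> int \<Rightarrow> real" where
  "blocknorm p g k = (LINT x:blk k|lebesgue. norm (g x) powr p)"

definition gterm :: "int set \<Rightarrow> real \<Rightarrow> real \<Rightarrow> real \<Rightarrow> (real \<Rightarrow> complex) \<Rightarrow> real \<Rightarrow> real" where
  "gterm X p q \<theta> g \<epsilon> =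
     \<epsilon> powr \<theta> * (\<Sum>\<^sub>\<infinity>k\<in>X. blocknorm p g k powr (q * (1 + \<epsilon>) / p))"

text \<open>membership in l^{q),theta}(L^p): measurable on the domain, each g chi_{I_k} in L^p,
  and the norm (a supremum over eps > 0) is finite, i.e. every series converges and
  the family of values is bounded above.\<close>
definition in_glq :: "int set \<Rightarrow> real \<Rightarrow> real \<Rightarrow> real \<Rightarrow> (real \<Rightarrow> complex) \<Rightarrow> bool" where
  "in_glq X p q \<theta> g \<longleftrightarrow>
     set_borel_measurable lebesgue (dom_X X) g \<and>
     (\<forall>k\<in>X. set_integrable lebesgue (blk k) (\<lambda>x. norm (g x) powr p)) \<and>
     (\<forall>\<epsilon>>0. (\<lambda>k. blocknorm p g k powr (q * (1 + \<epsilon>) / p)) summable_on X) \<and>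
     bdd_above ((\<lambda>\<epsilon>. gterm X p q \<theta> g \<epsilon> powr (1 / (q * (1 + \<epsilon>)))) ` {0<..})"

definition glq_norm :: "int set \<Rightarrow> real \<Rightarrow> real \<Rightarrow> real \<Rightarrow> (real \<Rightarrow> complex) \<Rightarrow> real" where
  "glq_norm X p q \<theta> g = (SUP \<epsilon>\<in>{0<..}. gterm X p q \<theta> g \<epsilon> powr (1 / (q * (1 + \<epsilon>))))"

definition vanishing_glq :: "int set \<Rightarrow> real \<Rightarrow> real \<Rightarrow> real \<Rightarrow> (real \<Rightarrow> complex) set" where
  "vanishing_glq X p q \<theta> =
     {g. in_glq X p q \<theta> g \<and> ((gterm X p q \<theta> g) \<longlongrightarrow> 0) (at_right 0)}"

end

theory Submission
  imports Defs
begin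

lemma pow2:
  fixes x y z a t :: real
  assumes "0 \<le> x" "0 \<le> y" "0 \<le> z" "0 \<le> a" "0 \<le> t" "z \<le> a * (x + y)"
  shows "z powr t \<le> (2 * a) powr t * (x powr t + y powr t)"
proof -
  define m where "m = max x y"
  have m0: "0 \<le> m" using assms by (simp add: m_def)
  have "x + y \<le> 2 * m" unfolding m_def by simp
  then have "a * (x + y) \<le> a * (2 * m)" using assms by (intro mult_left_mono) auto
  then have "z \<le> (2*a) * m" using assms by simp
  then have "z powr t \<le> ((2*a) * m) powr t" using assms by (intro powr_mono2) auto
  also have "\<dots> = (2*a) powr t * m powr t" by (rule powr_mult)
  also have "m powr t \<le> x powr t + y powr t" unfolding m_def
    by (cases "x \<le> y") (auto simp: max_def)
  then have "(2*a) powr t * m powr t \<le> (2 * a) powr t * (x powr t + y powr t)"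
    by (intro mult_left_mono) auto
  finally show ?thesis .
qed

lemma blk_sets[measurable]: "blk k \<in> sets lebesgue"
  unfolding blk_def by simp

lemma blk_sub: "k \<in> X \<Longrightarrow> blk k \<subseteq> dom_X X"
  unfolding dom_X_def by auto

lemma meas_pow:
  fixes u :: "real \<Rightarrow> complex"
  assumes "set_borel_measurable lebesgue (dom_X X) u" "k \<in> X" "0 < p"
  shows "set_borel_measurable lebesgue (blk k) (\<lambda>x. norm (u x) powr p)"
proof -
  have m: "(\<lambda>x. indicator (dom_X X) x *\<^sub>R u x) \<in> borel_measurable lebesgue"
    using assms(1) unfolding set_borel_measurable_def .
  have m2: "(\<lambda>x. indicator (blk k) x *\<^sub>R (indicator (dom_X X) x *\<^sub>R u x)) \<in> borel_measurable lebesgue"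
  proof -
    have mi: "(indicator (blk k) :: real \<Rightarrow> real) \<in> borel_measurable lebesgue"
      by (rule borel_measurable_indicator[OF blk_sets])
    show ?thesis using borel_measurable_scaleR[of "indicator (blk k)" lebesgue "\<lambda>x. indicator (dom_X X) x *\<^sub>R u x"] mi m by simp
  qed
  have m3: "(\<lambda>x. norm (indicator (blk k) x *\<^sub>R (indicator (dom_X X) x *\<^sub>R u x)) powr p) \<in> borel_measurable lebesgue"
    using m2 by measurable
  have eq: "(\<lambda>x. norm (indicator (blk k) x *\<^sub>R (indicator (dom_X X) x *\<^sub>R u x)) powr p)
      = (\<lambda>x. indicator (blk k) x *\<^sub>R (norm (u x) powr p))"
    using blk_sub[OF assms(2)] assms(3) by (auto simp: indicator_def fun_eq_iff)
  show ?thesis unfolding set_borel_measurable_def using m3 eq by simp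
qed

lemma blocknorm_nonneg: "0 \<le> blocknorm p g k"
  unfolding blocknorm_def set_lebesgue_integral_def by (intro Bochner_Integration.integral_nonneg) auto

lemma gterm_nonneg: "0 \<le> \<epsilon> \<Longrightarrow> 0 \<le> gterm X p q \<theta> g \<epsilon>"
  unfolding gterm_def by (intro mult_nonneg_nonneg infsum_nonneg) auto

lemma comb:
  fixes f h u :: "real \<Rightarrow> complex" and a p q \<theta> :: real
  assumes p: "1 \<le> p" and q: "1 \<le> q" and f: "in_glq X p q \<theta> f" and h: "in_glq X p q \<theta> h"
    and um: "set_borel_measurable lebesgue (dom_X X) u" and a: "0 \<le> a"
    and le: "\<And>x. norm (u x) \<le> a * (norm (f x) + norm (h x))"
  shows "in_glq X p q \<theta> u \<and> (\<forall>\<epsilon>. 0 < \<epsilon> \<and> \<epsilon> \<le> 1 \<longrightarrow>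
     gterm X p q \<theta> u \<epsilon> \<le> max 1 (2*(2*a) powr p) powr (2*q/p) * (gterm X p q \<theta> f \<epsilon> + gterm X p q \<theta> h \<epsilon>))"
proof -
  define C where "C = (2*a) powr p"
  have C0: "0 \<le> C" by (simp add: C_def)
  have pt: "norm (u x) powr p \<le> C * (norm (f x) powr p + norm (h x) powr p)" for x
    unfolding C_def by (rule pow2) (use p le a in auto)
  from f have fi: "\<And>k. k\<in>X \<Longrightarrow> set_integrable lebesgue (blk k) (\<lambda>x. norm (f x) powr p)"
    and fs: "\<And>\<epsilon>. \<epsilon>>0 \<Longrightarrow> (\<lambda>k. blocknorm p f k powr (q*(1+\<epsilon>)/p)) summable_on X"
    and fb: "bdd_above ((\<lambda>\<epsilon>. gterm X p q \<theta> f \<epsilon> powr (1 / (q * (1 + \<epsilon>)))) ` {0<..})"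
    unfolding in_glq_def by auto
  from h have hi: "\<And>k. k\<in>X \<Longrightarrow> set_integrable lebesgue (blk k) (\<lambda>x. norm (h x) powr p)"
    and hs: "\<And>\<epsilon>. \<epsilon>>0 \<Longrightarrow> (\<lambda>k. blocknorm p h k powr (q*(1+\<epsilon>)/p)) summable_on X"
    and hb: "bdd_above ((\<lambda>\<epsilon>. gterm X p q \<theta> h \<epsilon> powr (1 / (q * (1 + \<epsilon>)))) ` {0<..})"
    unfolding in_glq_def by auto
  have rhsi: "set_integrable lebesgue (blk k) (\<lambda>x. C * (norm (f x) powr p + norm (h x) powr p))"
    if "k \<in> X" for k
    using fi[OF that] hi[OF that] by (intro set_integrable_mult_right set_integral_add(1))
  have ui: "set_integrable lebesgue (blk k) (\<lambda>x. norm (u x) powr p)" if "k \<in> X" for k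
  proof (rule set_integrable_bound[OF rhsi[OF that] meas_pow[OF um that]])
    show "0 < p" using p by simp
    show "AE x in lebesgue. x \<in> blk k \<longrightarrow> norm (norm (u x) powr p)
        \<le> norm (C * (norm (f x) powr p + norm (h x) powr p))"
    proof (rule AE_I2, safe)
      fix x
      have "0 \<le> C * (norm (f x) powr p + norm (h x) powr p)" using C0 by simp
      then show "norm (norm (u x) powr p) \<le> norm (C * (norm (f x) powr p + norm (h x) powr p))"
        using pt[of x] by simp
    qed
  qed
  have bn: "blocknorm p u k \<le> C * (blocknorm p f k + blocknorm p h k)" if "k \<in> X" for k
  proof -
    have "blocknorm p u k \<le> (LINT x:blk k|lebesgue. C * (norm (f x) powr p + norm (h x) powr p))"
      unfolding blocknorm_def by (rule set_integral_mono[OF ui[OF that] rhsi[OF that] pt])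
    also have "\<dots> = C * (blocknorm p f k + blocknorm p h k)"
      unfolding blocknorm_def set_integral_mult_right set_integral_add(2)[OF fi[OF that] hi[OF that]] ..
    finally show ?thesis .
  qed
  have main: "(\<lambda>k. blocknorm p u k powr (q*(1+\<epsilon>)/p)) summable_on X \<and>
      gterm X p q \<theta> u \<epsilon> \<le> (2*C) powr (q*(1+\<epsilon>)/p) * (gterm X p q \<theta> f \<epsilon> + gterm X p q \<theta> h \<epsilon>)"
    if e: "\<epsilon> > 0" for \<epsilon>
  proof -
    define s where "s = q*(1+\<epsilon>)/p"
    have s0: "0 \<le> s" unfolding s_def using p q e by simp
    have bs: "blocknorm p u k powr s \<le> (2*C) powr s * (blocknorm p f k powr s + blocknorm p h k powr s)"
      if "k \<in> X" for k
      by (rule pow2) (use blocknorm_nonneg C0 s0 bn[OF that] in auto)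
    have rs: "(\<lambda>k. (2*C) powr s * (blocknorm p f k powr s + blocknorm p h k powr s)) summable_on X"
      using fs[OF e] hs[OF e] unfolding s_def by (intro summable_on_cmult_right summable_on_add)
    have us: "(\<lambda>k. blocknorm p u k powr s) summable_on X"
      by (rule summable_on_comparison_test[OF rs bs]) auto
    have "(\<Sum>\<^sub>\<infinity>k\<in>X. blocknorm p u k powr s) \<le> (\<Sum>\<^sub>\<infinity>k\<in>X. (2*C) powr s * (blocknorm p f k powr s + blocknorm p h k powr s))"
      by (rule infsum_mono[OF us rs bs])
    also have "\<dots> = (2*C) powr s * ((\<Sum>\<^sub>\<infinity>k\<in>X. blocknorm p f k powr s) + (\<Sum>\<^sub>\<infinity>k\<in>X. blocknorm p h k powr s))"
      using fs[OF e] hs[OF e] unfolding s_def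
      by (subst infsum_cmult_right) (auto intro: summable_on_add simp: infsum_add)
    finally have "\<epsilon> powr \<theta> * (\<Sum>\<^sub>\<infinity>k\<in>X. blocknorm p u k powr s) \<le> \<epsilon> powr \<theta> * ((2*C) powr s * ((\<Sum>\<^sub>\<infinity>k\<in>X. blocknorm p f k powr s) + (\<Sum>\<^sub>\<infinity>k\<in>X. blocknorm p h k powr s)))"
      by (intro mult_left_mono) auto
    then have "gterm X p q \<theta> u \<epsilon> \<le> (2*C) powr s * (gterm X p q \<theta> f \<epsilon> + gterm X p q \<theta> h \<epsilon>)"
      unfolding gterm_def s_def by (simp add: algebra_simps)
    with us show ?thesis unfolding s_def by simp
  qed
  obtain Mf where Mf: "\<And>\<epsilon>. \<epsilon> > 0 \<Longrightarrow> gterm X p q \<theta> f \<epsilon> powr (1 / (q * (1 + \<epsilon>))) \<le> Mf"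
    using fb unfolding bdd_above_def by auto
  obtain Mh where Mh: "\<And>\<epsilon>. \<epsilon> > 0 \<Longrightarrow> gterm X p q \<theta> h \<epsilon> powr (1 / (q * (1 + \<epsilon>))) \<le> Mh"
    using hb unfolding bdd_above_def by auto
  have bd: "gterm X p q \<theta> u \<epsilon> powr (1 / (q * (1 + \<epsilon>))) \<le> 2 * (2*C) powr (1/p) * (Mf + Mh)"
    if e: "\<epsilon> > 0" for \<epsilon>
  proof -
    define s where "s = q*(1+\<epsilon>)/p"
    define r where "r = q*(1+\<epsilon>)"
    have "q * 1 \<le> q * (1 + \<epsilon>)" using q e by (intro mult_left_mono) auto
    then have r1: "1 \<le> r" unfolding r_def using q by linarith
    have s0: "0 \<le> s" unfolding s_def using p q e by simp
    have "gterm X p q \<theta> u \<epsilon> powr (1/r) \<le> (2 * (2*C) powr s) powr (1/r) *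
        (gterm X p q \<theta> f \<epsilon> powr (1/r) + gterm X p q \<theta> h \<epsilon> powr (1/r))"
      by (rule pow2) (use main[OF e] gterm_nonneg[of \<epsilon>] e r1 in \<open>auto simp: s_def\<close>)
    also have "(2 * (2*C) powr s) powr (1/r) = 2 powr (1/r) * (2*C) powr (1/p)"
      unfolding powr_mult powr_powr s_def r_def using p q e by simp
    also have "2 powr (1/r) * (2*C) powr (1/p) * (gterm X p q \<theta> f \<epsilon> powr (1/r) + gterm X p q \<theta> h \<epsilon> powr (1/r))
        \<le> 2 * (2*C) powr (1/p) * (Mf + Mh)"
    proof (intro mult_mono)
      show "2 powr (1/r) \<le> 2" using powr_mono[of "1/r" 1 2] r1 by simp
      show "gterm X p q \<theta> f \<epsilon> powr (1/r) + gterm X p q \<theta> h \<epsilon> powr (1/r) \<le> Mf + Mh"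
        using Mf[OF e] Mh[OF e] unfolding r_def by simp
    qed auto
    finally show ?thesis unfolding r_def .
  qed
  have inu: "in_glq X p q \<theta> u"
    unfolding in_glq_def
  proof (intro conjI ballI allI impI)
    show "set_borel_measurable lebesgue (dom_X X) u" by (rule um)
    show "set_integrable lebesgue (blk k) (\<lambda>x. norm (u x) powr p)" if "k \<in> X" for k using ui[OF that] .
    show "(\<lambda>k. blocknorm p u k powr (q * (1 + \<epsilon>) / p)) summable_on X" if "\<epsilon> > 0" for \<epsilon>
      using main[OF that] by simp
    show "bdd_above ((\<lambda>\<epsilon>. gterm X p q \<theta> u \<epsilon> powr (1 / (q * (1 + \<epsilon>)))) ` {0<..})"
      unfolding bdd_above_def using bd by auto
  qed
  define K where "K = max 1 (2*C) powr (2*q/p)"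
  have "gterm X p q \<theta> u \<epsilon> \<le> K * (gterm X p q \<theta> f \<epsilon> + gterm X p q \<theta> h \<epsilon>)"
    if e: "0 < \<epsilon>" "\<epsilon> \<le> 1" for \<epsilon>
  proof -
    have "(2*C) powr (q*(1+\<epsilon>)/p) \<le> max 1 (2*C) powr (q*(1+\<epsilon>)/p)"
      by (rule powr_mono2) (use C0 p q e in auto)
    also have "\<dots> \<le> K" unfolding K_def
      by (rule powr_mono) (use p q e in \<open>auto simp: divide_right_mono\<close>)
    finally have "(2*C) powr (q*(1+\<epsilon>)/p) \<le> K" .
    moreover have "0 \<le> gterm X p q \<theta> f \<epsilon> + gterm X p q \<theta> h \<epsilon>"
      using gterm_nonneg[of \<epsilon>] e by (simp add: add_nonneg_nonneg)
    ultimately have "(2*C) powr (q*(1+\<epsilon>)/p) * (gterm X p q \<theta> f \<epsilon> + gterm X p q \<theta> h \<epsilon>)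
       \<le> K * (gterm X p q \<theta> f \<epsilon> + gterm X p q \<theta> h \<epsilon>)" by (rule mult_right_mono)
    then show ?thesis using main[OF e(1)] by linarith
  qed
  with inu show ?thesis unfolding K_def C_def by blast
qed

lemma sbm_add:
  fixes f h :: "real \<Rightarrow> complex"
  assumes "set_borel_measurable lebesgue S f" "set_borel_measurable lebesgue S h"
  shows "set_borel_measurable lebesgue S (\<lambda>x. f x + h x)"
    and "set_borel_measurable lebesgue S (\<lambda>x. f x - h x)"
    and "set_borel_measurable lebesgue S (\<lambda>x. c * f x)"
proof -
  have m1: "(\<lambda>x. indicator S x *\<^sub>R f x) \<in> borel_measurable lebesgue"
    and m2: "(\<lambda>x. indicator S x *\<^sub>R h x) \<in> borel_measurable lebesgue"
    using assms unfolding set_borel_measurable_def by auto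
  have "(\<lambda>x. indicator S x *\<^sub>R f x + indicator S x *\<^sub>R h x) \<in> borel_measurable lebesgue"
    using m1 m2 by (rule borel_measurable_add)
  then show "set_borel_measurable lebesgue S (\<lambda>x. f x + h x)"
    unfolding set_borel_measurable_def by (simp add: scaleR_add_right)
  have "(\<lambda>x. indicator S x *\<^sub>R f x - indicator S x *\<^sub>R h x) \<in> borel_measurable lebesgue"
    using m1 m2 by (rule borel_measurable_diff)
  then show "set_borel_measurable lebesgue S (\<lambda>x. f x - h x)"
    unfolding set_borel_measurable_def by (simp add: scaleR_diff_right)
  have "(\<lambda>x. c * (indicator S x *\<^sub>R f x)) \<in> borel_measurable lebesgue"
    using m1 by (intro borel_measurable_times borel_measurable_const)
  then show "set_borel_measurable lebesgue S (\<lambda>x. c * f x)"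
    unfolding set_borel_measurable_def by (simp add: mult_scaleR_right)
qed

lemma ev01: "\<forall>\<^sub>F \<epsilon> in at_right (0::real). 0 < \<epsilon> \<and> \<epsilon> \<le> 1"
  unfolding eventually_at_right_field by (intro exI[of _ 1]) auto

lemma van_from:
  assumes "\<forall>\<epsilon>. 0 < \<epsilon> \<and> \<epsilon> \<le> 1 \<longrightarrow> gterm X p q \<theta> u \<epsilon> \<le> K * (gterm X p q \<theta> f \<epsilon> + gterm X p q \<theta> h \<epsilon>)"
    and "(gterm X p q \<theta> f \<longlongrightarrow> 0) (at_right 0)" "(gterm X p q \<theta> h \<longlongrightarrow> 0) (at_right 0)"
  shows "(gterm X p q \<theta> u \<longlongrightarrow> 0) (at_right 0)"
proof (rule tendsto_sandwich[of "\<lambda>_. 0" _ _ "\<lambda>\<epsilon>. K * (gterm X p q \<theta> f \<epsilon> + gterm X p q \<theta> h \<epsilon>)"])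
  show "\<forall>\<^sub>F \<epsilon> in at_right 0. 0 \<le> gterm X p q \<theta> u \<epsilon>"
    using ev01 by eventually_elim (auto intro: gterm_nonneg)
  show "\<forall>\<^sub>F \<epsilon> in at_right 0. gterm X p q \<theta> u \<epsilon> \<le> K * (gterm X p q \<theta> f \<epsilon> + gterm X p q \<theta> h \<epsilon>)"
    using ev01 by eventually_elim (use assms(1) in auto)
  show "((\<lambda>\<epsilon>. K * (gterm X p q \<theta> f \<epsilon> + gterm X p q \<theta> h \<epsilon>)) \<longlongrightarrow> 0) (at_right 0)"
    using tendsto_mult_right_zero[OF tendsto_add_zero[OF assms(2,3)]] by simp
qed auto

lemma zero_facts: "blocknorm p (\<lambda>x. 0) k = 0" "gterm X p q \<theta> (\<lambda>x. 0) \<epsilon> = 0"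
  by (simp_all add: blocknorm_def gterm_def)

theorem theorem2p11:
  fixes X :: "int set" and p q \<theta> :: real
  assumes "X \<in> {{1..}, {0..}, UNIV}"
    and "1 \<le> p" and "1 \<le> q" and "\<theta> > 0"
  shows "(\<forall>g\<in>vanishing_glq X p q \<theta>. in_glq X p q \<theta> g)
    \<and> (\<lambda>x. 0) \<in> vanishing_glq X p q \<theta>
    \<and> (\<forall>f\<in>vanishing_glq X p q \<theta>. \<forall>g\<in>vanishing_glq X p q \<theta>.
          (\<lambda>x. f x + g x) \<in> vanishing_glq X p q \<theta>)
    \<and> (\<forall>c::complex. \<forall>g\<in>vanishing_glq X p q \<theta>. (\<lambda>x. c * g x) \<in> vanishing_glq X p q \<theta>)
    \<and> (\<forall>G g. (\<forall>n. G n \<in> vanishing_glq X p q \<theta>) \<longrightarrow> in_glq X p q \<theta> g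
          \<longrightarrow> (\<lambda>n. glq_norm X p q \<theta> (\<lambda>x. G n x - g x)) \<longlonglongrightarrow> 0
          \<longrightarrow> g \<in> vanishing_glq X p q \<theta>)"
proof -
  have p: "1 \<le> p" and q: "1 \<le> q" using assms by auto
  define V where "V = vanishing_glq X p q \<theta>"
  have P1: "\<forall>g\<in>V. in_glq X p q \<theta> g" unfolding V_def vanishing_glq_def by auto
  have P2: "(\<lambda>x. 0) \<in> V"
  proof -
    have "in_glq X p q \<theta> (\<lambda>x. 0)"
      unfolding in_glq_def zero_facts
      by (auto simp: set_borel_measurable_def bdd_above_def)
    moreover have "gterm X p q \<theta> (\<lambda>x. 0) = (\<lambda>_. 0)" by (rule ext) (simp add: zero_facts)
    ultimately show ?thesis unfolding V_def vanishing_glq_def by simp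
  qed
  have P3: "(\<lambda>x. f x + g x) \<in> V" if f: "f \<in> V" and g: "g \<in> V" for f g
  proof -
    from f g have fi: "in_glq X p q \<theta> f" and gi: "in_glq X p q \<theta> g"
      and ft: "(gterm X p q \<theta> f \<longlongrightarrow> 0) (at_right 0)" and gt: "(gterm X p q \<theta> g \<longlongrightarrow> 0) (at_right 0)"
      unfolding V_def vanishing_glq_def by auto
    have m: "set_borel_measurable lebesgue (dom_X X) (\<lambda>x. f x + g x)"
      using fi gi unfolding in_glq_def by (intro sbm_add) auto
    have c: "in_glq X p q \<theta> (\<lambda>x. f x + g x) \<and> (\<forall>\<epsilon>. 0 < \<epsilon> \<and> \<epsilon> \<le> 1 \<longrightarrow>
     gterm X p q \<theta> (\<lambda>x. f x + g x) \<epsilon> \<le> max 1 (2*(2*1) powr p) powr (2*q/p) * (gterm X p q \<theta> f \<epsilon> + gterm X p q \<theta> g \<epsilon>))"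
      by (rule comb[OF p q fi gi m]) (auto simp: norm_triangle_ineq)
    then show ?thesis unfolding V_def vanishing_glq_def using van_from[OF _ ft gt] by auto
  qed
  have P4: "(\<lambda>x. c * g x) \<in> V" if g: "g \<in> V" for c g
  proof -
    from g have gi: "in_glq X p q \<theta> g"
      and gt: "(gterm X p q \<theta> g \<longlongrightarrow> 0) (at_right 0)"
      unfolding V_def vanishing_glq_def by auto
    have m: "set_borel_measurable lebesgue (dom_X X) (\<lambda>x. c * g x)"
      using gi unfolding in_glq_def by (intro sbm_add) auto
    have c: "in_glq X p q \<theta> (\<lambda>x. c * g x) \<and> (\<forall>\<epsilon>. 0 < \<epsilon> \<and> \<epsilon> \<le> 1 \<longrightarrow>
     gterm X p q \<theta> (\<lambda>x. c * g x) \<epsilon> \<le> max 1 (2*(2*(norm c / 2)) powr p) powr (2*q/p) * (gterm X p q \<theta> g \<epsilon> + gterm X p q \<theta> g \<epsilon>))"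
      by (rule comb[OF p q gi gi m]) (auto simp: norm_mult)
    then show ?thesis unfolding V_def vanishing_glq_def using van_from[OF _ gt gt] by auto
  qed
  have P5: "g \<in> V" if G: "\<forall>n. G n \<in> V" and gi: "in_glq X p q \<theta> g"
    and N: "(\<lambda>n. glq_norm X p q \<theta> (\<lambda>x. G n x - g x)) \<longlonglongrightarrow> 0" for G g
  proof -
    define N where "N n = glq_norm X p q \<theta> (\<lambda>x. G n x - g x)" for n
    define K where "K = max 1 (2*(2*(1::real)) powr p) powr (2*q/p)"
    have K0: "0 \<le> K" unfolding K_def by simp
    have Gi: "in_glq X p q \<theta> (G n)" and Gt: "(gterm X p q \<theta> (G n) \<longlongrightarrow> 0) (at_right 0)" for n
      using G unfolding V_def vanishing_glq_def by auto
    have Gm: "set_borel_measurable lebesgue (dom_X X) (G n)" for n using Gi[of n] unfolding in_glq_def by auto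
    have gm: "set_borel_measurable lebesgue (dom_X X) g" using gi unfolding in_glq_def by auto
    have Di: "in_glq X p q \<theta> (\<lambda>x. G n x - g x)" for n
      using comb[OF p q Gi[of n] gi sbm_add(2)[OF Gm[of n] gm], of 1] by (auto simp: norm_triangle_ineq4)
    have gle: "gterm X p q \<theta> g \<epsilon> \<le> K * (gterm X p q \<theta> (G n) \<epsilon> + gterm X p q \<theta> (\<lambda>x. G n x - g x) \<epsilon>)"
      if "0 < \<epsilon>" "\<epsilon> \<le> 1" for n \<epsilon>
    proof -
      have "\<forall>x. norm (g x) \<le> 1 * (norm (G n x) + norm (G n x - g x))"
        using norm_triangle_ineq4[of "G n x" "G n x - g x" for x] by (auto simp: algebra_simps)
      then show ?thesis using comb[OF p q Gi[of n] Di[of n] gm, of 1] that unfolding K_def by auto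
    qed
    have Dle: "gterm X p q \<theta> (\<lambda>x. G n x - g x) \<epsilon> \<le> N n powr q"
      if e: "0 < \<epsilon>" "\<epsilon> \<le> 1" and N1: "N n \<le> 1" for n \<epsilon>
    proof -
      define v where "v = gterm X p q \<theta> (\<lambda>x. G n x - g x) \<epsilon>"
      define r where "r = q * (1 + \<epsilon>)"
      have "q * 1 \<le> q * (1 + \<epsilon>)" using q e by (intro mult_left_mono) auto
      then have qr: "q \<le> r" unfolding r_def by simp
      have v0: "0 \<le> v" unfolding v_def using e by (simp add: gterm_nonneg)
      have bdd: "bdd_above ((\<lambda>\<epsilon>. gterm X p q \<theta> (\<lambda>x. G n x - g x) \<epsilon> powr (1 / (q * (1 + \<epsilon>)))) ` {0<..})"
        using Di[of n] unfolding in_glq_def by auto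
      have vN: "v powr (1/r) \<le> N n"
        unfolding v_def r_def N_def glq_norm_def by (rule cSUP_upper[OF _ bdd]) (use e in auto)
      have N0: "0 \<le> N n" by (rule order_trans[OF powr_ge_zero vN])
      have "v = (v powr (1/r)) powr r" using v0 qr q by (simp add: powr_powr)
      also have "\<dots> \<le> N n powr r" by (rule powr_mono2) (use qr q vN in auto)
      also have "\<dots> \<le> N n powr q" by (rule powr_mono') (use qr N0 N1 in auto)
      finally show ?thesis unfolding v_def .
    qed
    have "(gterm X p q \<theta> g \<longlongrightarrow> 0) (at_right 0)"
      unfolding tendsto_iff
    proof (intro allI impI)
      fix \<delta> :: real assume d: "\<delta> > 0"
      have N': "N \<longlonglongrightarrow> 0" using N unfolding N_def .
      have "(\<lambda>n. K * \<bar>N n\<bar> powr q) \<longlonglongrightarrow> K * 0"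
        using q by (intro tendsto_mult tendsto_const tendsto_zero_powrI tendsto_rabs_zero N') auto
      then have e1: "eventually (\<lambda>n. K * \<bar>N n\<bar> powr q < \<delta>/2) sequentially"
        using d by (intro order_tendstoD(2)) auto
      have e2: "eventually (\<lambda>n. N n < 1) sequentially"
        using N' by (intro order_tendstoD(2)) auto
      obtain M where "\<forall>n\<ge>M. K * \<bar>N n\<bar> powr q < \<delta>/2 \<and> N n < 1"
        using eventually_conj[OF e1 e2] unfolding eventually_sequentially by blast
      then obtain n where n1: "K * \<bar>N n\<bar> powr q < \<delta>/2" and n2: "N n < 1" by blast
      have N0: "0 \<le> N n"
      proof -
        have bdd: "bdd_above ((\<lambda>\<epsilon>. gterm X p q \<theta> (\<lambda>x. G n x - g x) \<epsilon> powr (1 / (q * (1 + \<epsilon>)))) ` {0<..})"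
          using Di[of n] unfolding in_glq_def by auto
        have "gterm X p q \<theta> (\<lambda>x. G n x - g x) 1 powr (1 / (q * (1 + 1))) \<le> N n"
          unfolding N_def glq_norm_def by (rule cSUP_upper[OF _ bdd]) auto
        then show ?thesis by (rule order_trans[OF powr_ge_zero])
      qed
      have "((\<lambda>\<epsilon>. K * gterm X p q \<theta> (G n) \<epsilon>) \<longlongrightarrow> K * 0) (at_right 0)"
        by (intro tendsto_mult tendsto_const Gt)
      then have e3: "\<forall>\<^sub>F \<epsilon> in at_right 0. K * gterm X p q \<theta> (G n) \<epsilon> < \<delta>/2"
        using d by (intro order_tendstoD(2)) auto
      show "\<forall>\<^sub>F \<epsilon> in at_right 0. dist (gterm X p q \<theta> g \<epsilon>) 0 < \<delta>"
        using e3 ev01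
      proof eventually_elim
        case (elim \<epsilon>)
        have "gterm X p q \<theta> g \<epsilon> \<le> K * (gterm X p q \<theta> (G n) \<epsilon> + gterm X p q \<theta> (\<lambda>x. G n x - g x) \<epsilon>)"
          using gle elim by auto
        also have "\<dots> \<le> K * (gterm X p q \<theta> (G n) \<epsilon> + N n powr q)"
          using Dle[of \<epsilon> n] elim n2 K0 by (intro mult_left_mono add_left_mono) auto
        also have "\<dots> < \<delta>" using elim n1 N0 by (simp add: algebra_simps)
        finally show ?case using gterm_nonneg[of \<epsilon>] elim by simp
      qed
    qed
    with gi show ?thesis unfolding V_def vanishing_glq_def by auto
  qed
  show ?thesis unfolding V_def[symmetric] using P1 P2 P3 P4 P5 by blast
qed

end
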